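(* Let $(F,+,\cdot)$ be a (left) near-field and let $\sigma,\rho$ be multiplicative automorphisms of $F$. Let $F^{\sigma,\rho}$ denote the abelian group $(F,+_\sigma)$ equipped with the action $\alpha\cdot_\rho\beta=\rho(\alpha)\beta$ of $(F,\cdot)$. Then $F^{\sigma,\rho}$ is a near-vector space over the scalar group $(F,\cdot,1,0,-1)$, its quasi-kernel is $Q(F^{\sigma,\rho})=F$, and for every $\gamma\in F\setminus\{0\}$ the addition $+_\gamma$ determined by $\gamma\in Q(F^{\sigma,\rho})$ satisfies $$+_\gamma=+_{\sigma(\gamma),\sigma\circ\rho}=+_{\varphi_{\sigma(\gamma)}\circ\sigma\circ\rho}=+_{\sigma\circ\varphi_\gamma\circ\rho}.$$ In particular $+_1=+_{\sigma\circ\rho}$.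
   Context: A (left) near-field is $(F,+,\cdot,0,1)$ where $(F,\cdot,1)$ is a monoid, $(F\setminus\{0\},\cdot)$ is a group, $(F,+,0)$ is an abelian group, and $\alpha(\beta+\gamma)=\alpha\beta+\alpha\gamma$. A multiplicative automorphism is a monoid automorphism of $(F,\cdot)$. For a multiplicative automorphism $\tau$, $\alpha+_\tau\beta=\tau^{-1}(\tau(\alpha)+\tau(\beta))$. For $\delta\in F\setminus\{0\}$, $\varphi_\delta(\alpha)=\delta^{-1}\alpha\delta$. For $\delta\in F\setminus\{0\}$, let $\alpha\oplus_\delta\beta=(\alpha\delta+\beta\delta)\delta^{-1}$ (the addition determined by $\delta$ in the near-field $F$ viewed as a near-vector space over itself), and $\alpha+_{\delta,\tau}\beta=\tau^{-1}(\tau(\alpha)\oplus_\delta\tau(\beta))$. A scalar group, $F$-space, quasi-kernel $Q(V)=\{u:\forall\alpha,\beta\ \exists\gamma,\ \alpha u+\beta u=\gamma u\}$ and near-vector space (an $F$-space with free action whose quasi-kernel generates it additively) are as usual; for $u\in Q(V)\setminus\{0\}$, $\alpha+_u\beta$ is the unique $\gamma$ with $\alpha u+\beta u=\gamma u$ (here with the addition and action of $F^{\sigma,\rho}$). *)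

theory Defs
  imports Main
begin

(* All structures live on the whole type (carrier = UNIV). *)

definition is_monoid :: "('a \<Rightarrow> 'a \<Rightarrow> 'a) \<Rightarrow> 'a \<Rightarrow> bool" where
  "is_monoid m e \<longleftrightarrow> (\<forall>a b c. m (m a b) c = m a (m b c)) \<and> (\<forall>a. m e a = a \<and> m a e = a)"

definition is_abelian_group :: "('a \<Rightarrow> 'a \<Rightarrow> 'a) \<Rightarrow> 'a \<Rightarrow> bool" where
  "is_abelian_group p z \<longleftrightarrow> is_monoid p z \<and> (\<forall>a b. p a b = p b a) \<and> (\<forall>a. \<exists>b. p a b = z)"

definition nonzero_group :: "('a \<Rightarrow> 'a \<Rightarrow> 'a) \<Rightarrow> 'a \<Rightarrow> 'a \<Rightarrow> bool" where
  "nonzero_group m u0 u1 \<longleftrightarrow> u1 \<noteq> u0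
     \<and> (\<forall>a b. a \<noteq> u0 \<and> b \<noteq> u0 \<longrightarrow> m a b \<noteq> u0)
     \<and> (\<forall>a b c. m (m a b) c = m a (m b c))
     \<and> (\<forall>a. a \<noteq> u0 \<longrightarrow> m u1 a = a \<and> m a u1 = a)
     \<and> (\<forall>a. a \<noteq> u0 \<longrightarrow> (\<exists>b. b \<noteq> u0 \<and> m a b = u1 \<and> m b a = u1))"

definition near_field :: "('a \<Rightarrow> 'a \<Rightarrow> 'a) \<Rightarrow> ('a \<Rightarrow> 'a \<Rightarrow> 'a) \<Rightarrow> 'a \<Rightarrow> 'a \<Rightarrow> bool" where
  "near_field add mul u0 u1 \<longleftrightarrow> is_monoid mul u1 \<and> nonzero_group mul u0 u1
     \<and> is_abelian_group add u0
     \<and> (\<forall>a b c. mul a (add b c) = add (mul a b) (mul a c))"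

definition mult_aut :: "('a \<Rightarrow> 'a \<Rightarrow> 'a) \<Rightarrow> 'a \<Rightarrow> ('a \<Rightarrow> 'a) \<Rightarrow> bool" where
  "mult_aut mul u1 \<tau> \<longleftrightarrow> bij \<tau> \<and> (\<forall>a b. \<tau> (mul a b) = mul (\<tau> a) (\<tau> b)) \<and> \<tau> u1 = u1"

definition nf_neg :: "('a \<Rightarrow> 'a \<Rightarrow> 'a) \<Rightarrow> 'a \<Rightarrow> 'a \<Rightarrow> 'a" where
  "nf_neg add u0 a = (THE b. add a b = u0)"

definition nf_inv :: "('a \<Rightarrow> 'a \<Rightarrow> 'a) \<Rightarrow> 'a \<Rightarrow> 'a \<Rightarrow> 'a" where
  "nf_inv mul u1 d = (THE x. mul d x = u1)"

definition tw_add :: "('a \<Rightarrow> 'a \<Rightarrow> 'a) \<Rightarrow> ('a \<Rightarrow> 'a) \<Rightarrow> 'a \<Rightarrow> 'a \<Rightarrow> 'a" where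
  "tw_add add \<tau> a b = inv \<tau> (add (\<tau> a) (\<tau> b))"

definition phi :: "('a \<Rightarrow> 'a \<Rightarrow> 'a) \<Rightarrow> 'a \<Rightarrow> 'a \<Rightarrow> 'a \<Rightarrow> 'a" where
  "phi mul u1 d a = mul (mul (nf_inv mul u1 d) a) d"

definition oplus_d :: "('a \<Rightarrow> 'a \<Rightarrow> 'a) \<Rightarrow> ('a \<Rightarrow> 'a \<Rightarrow> 'a) \<Rightarrow> 'a \<Rightarrow> 'a \<Rightarrow> 'a \<Rightarrow> 'a \<Rightarrow> 'a" where
  "oplus_d add mul u1 d a b = mul (add (mul a d) (mul b d)) (nf_inv mul u1 d)"

definition add_dt :: "('a \<Rightarrow> 'a \<Rightarrow> 'a) \<Rightarrow> ('a \<Rightarrow> 'a \<Rightarrow> 'a) \<Rightarrow> 'a \<Rightarrow> 'a \<Rightarrow> ('a \<Rightarrow> 'a) \<Rightarrow> 'a \<Rightarrow> 'a \<Rightarrow> 'a" where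
  "add_dt add mul u1 d \<tau> a b = inv \<tau> (oplus_d add mul u1 d (\<tau> a) (\<tau> b))"

text \<open>Scalar group (F, mul, 1, 0, m) with m playing the role of -1.\<close>
definition scalar_group :: "('s \<Rightarrow> 's \<Rightarrow> 's) \<Rightarrow> 's \<Rightarrow> 's \<Rightarrow> 's \<Rightarrow> bool" where
  "scalar_group mul u1 u0 m \<longleftrightarrow> is_monoid mul u1
     \<and> (\<forall>a. mul u0 a = u0 \<and> mul a u0 = u0)
     \<and> nonzero_group mul u0 u1
     \<and> m \<noteq> u0 \<and> mul m m = u1 \<and> (\<forall>a. mul m a = mul a m)"

definition F_space :: "('s \<Rightarrow> 's \<Rightarrow> 's) \<Rightarrow> 's \<Rightarrow> 's \<Rightarrow> 's \<Rightarrow>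
     ('v \<Rightarrow> 'v \<Rightarrow> 'v) \<Rightarrow> 'v \<Rightarrow> ('s \<Rightarrow> 'v \<Rightarrow> 'v) \<Rightarrow> bool" where
  "F_space mul u1 u0 m vadd vz act \<longleftrightarrow> scalar_group mul u1 u0 m
     \<and> is_abelian_group vadd vz
     \<and> (\<forall>a b v. act (mul a b) v = act a (act b v))
     \<and> (\<forall>v. act u1 v = v)
     \<and> (\<forall>v. act u0 v = vz)
     \<and> (\<forall>v. vadd (act m v) v = vz)
     \<and> (\<forall>a u v. act a (vadd u v) = vadd (act a u) (act a v))"

definition quasi_kernel :: "('v \<Rightarrow> 'v \<Rightarrow> 'v) \<Rightarrow> ('s \<Rightarrow> 'v \<Rightarrow> 'v) \<Rightarrow> 'v set" where
  "quasi_kernel vadd act = {u. \<forall>a b. \<exists>c. vadd (act a u) (act b u) = act c u}"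

inductive_set add_span :: "('v \<Rightarrow> 'v \<Rightarrow> 'v) \<Rightarrow> 'v \<Rightarrow> 'v set \<Rightarrow> 'v set"
  for vadd vz S where
  base: "x \<in> S \<Longrightarrow> x \<in> add_span vadd vz S"
| zero: "vz \<in> add_span vadd vz S"
| plus: "x \<in> add_span vadd vz S \<Longrightarrow> y \<in> add_span vadd vz S \<Longrightarrow> vadd x y \<in> add_span vadd vz S"
| neg: "x \<in> add_span vadd vz S \<Longrightarrow> vadd x y = vz \<Longrightarrow> y \<in> add_span vadd vz S"

definition near_vector_space :: "('s \<Rightarrow> 's \<Rightarrow> 's) \<Rightarrow> 's \<Rightarrow> 's \<Rightarrow> 's \<Rightarrow>
     ('v \<Rightarrow> 'v \<Rightarrow> 'v) \<Rightarrow> 'v \<Rightarrow> ('s \<Rightarrow> 'v \<Rightarrow> 'v) \<Rightarrow> bool" where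
  "near_vector_space mul u1 u0 m vadd vz act \<longleftrightarrow> F_space mul u1 u0 m vadd vz act
     \<and> (\<forall>a b v. act a v = act b v \<longrightarrow> a = b \<or> v = vz)
     \<and> add_span vadd vz (quasi_kernel vadd act) = UNIV"

text \<open>For u in Q(V) minus 0: alpha +_u beta is the unique gamma with alpha u + beta u = gamma u.\<close>
definition qk_add :: "('v \<Rightarrow> 'v \<Rightarrow> 'v) \<Rightarrow> ('s \<Rightarrow> 'v \<Rightarrow> 'v) \<Rightarrow> 'v \<Rightarrow> 's \<Rightarrow> 's \<Rightarrow> 's" where
  "qk_add vadd act u a b = (THE c. vadd (act a u) (act b u) = act c u)"

end

theory Submission
  imports Defs
begin

locale NF =
  fixes add mul :: "'a \<Rightarrow> 'a \<Rightarrow> 'a" and u0 u1 :: 'a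
  assumes NF: "near_field add mul u0 u1"
begin

lemma massoc: "mul (mul a b) c = mul a (mul b c)"
  using NF unfolding near_field_def is_monoid_def by blast
lemma mone[simp]: "mul u1 a = a" "mul a u1 = a"
  using NF unfolding near_field_def is_monoid_def by blast+
lemma aassoc: "add (add a b) c = add a (add b c)"
  using NF unfolding near_field_def is_abelian_group_def is_monoid_def by blast
lemma acomm: "add a b = add b a"
  using NF unfolding near_field_def is_abelian_group_def is_monoid_def by blast
lemma azero[simp]: "add u0 a = a" "add a u0 = a"
  using NF unfolding near_field_def is_abelian_group_def is_monoid_def by blast+
lemma aneg: "\<exists>b. add a b = u0"
  using NF unfolding near_field_def is_abelian_group_def is_monoid_def by blast
lemma distr: "mul a (add b c) = add (mul a b) (mul a c)"
  using NF unfolding near_field_def by blast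
lemma one_ne_zero: "u1 \<noteq> u0"
  using NF unfolding near_field_def nonzero_group_def by blast
lemma nz_closed: "a \<noteq> u0 \<Longrightarrow> b \<noteq> u0 \<Longrightarrow> mul a b \<noteq> u0"
  using NF unfolding near_field_def nonzero_group_def by blast
lemma inv_ex: "a \<noteq> u0 \<Longrightarrow> \<exists>b. b \<noteq> u0 \<and> mul a b = u1 \<and> mul b a = u1"
  using NF unfolding near_field_def nonzero_group_def by blast

lemma acancel: "add x y = add x z \<Longrightarrow> y = z"
proof -
  assume h: "add x y = add x z"
  obtain n where n: "add x n = u0" using aneg by blast
  have "y = add (add n x) y" using n by (simp add: acomm)
  also have "\<dots> = add (add n x) z" using h by (simp add: aassoc)
  also have "\<dots> = z" using n by (simp add: acomm)
  finally show ?thesis .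
qed

lemma mzero_r[simp]: "mul a u0 = u0"
proof -
  have "mul a (add u0 u0) = add (mul a u0) (mul a u0)" by (rule distr)
  then have "add (mul a u0) (mul a u0) = add (mul a u0) u0" by simp
  then show ?thesis by (rule acancel)
qed

lemma rcancel: "a \<noteq> u0 \<Longrightarrow> mul x a = mul y a \<Longrightarrow> x = y"
proof -
  assume a: "a \<noteq> u0" and h: "mul x a = mul y a"
  obtain b where b: "mul a b = u1" using inv_ex[OF a] by blast
  have "x = mul (mul x a) b" using b by (simp add: massoc)
  also have "\<dots> = mul (mul y a) b" using h by simp
  also have "\<dots> = y" using b by (simp add: massoc)
  finally show ?thesis .
qed
lemma lcancel: "a \<noteq> u0 \<Longrightarrow> mul a x = mul a y \<Longrightarrow> x = y"
proof -
  assume a: "a \<noteq> u0" and h: "mul a x = mul a y"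
  obtain b where b: "mul b a = u1" using inv_ex[OF a] by blast
  have "x = mul b (mul a x)" using b by (simp add: massoc[symmetric])
  also have "\<dots> = mul b (mul a y)" using h by simp
  also have "\<dots> = y" using b by (simp add: massoc[symmetric])
  finally show ?thesis .
qed

lemma mzero_l[simp]: "mul u0 a = u0"
proof (cases "a = u0")
  case False
  then obtain b where b: "b \<noteq> u0" "mul a b = u1" using inv_ex by blast
  have "mul (mul u0 a) b = u0" using b by (simp add: massoc)
  then show ?thesis using nz_closed b(1) by blast
qed simp

lemma ninv: "d \<noteq> u0 \<Longrightarrow> mul d (nf_inv mul u1 d) = u1 \<and> mul (nf_inv mul u1 d) d = u1 \<and> nf_inv mul u1 d \<noteq> u0"
proof -
  assume d: "d \<noteq> u0"
  then obtain b where b: "b \<noteq> u0" "mul d b = u1" "mul b d = u1" using inv_ex by blast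
  have "nf_inv mul u1 d = b" unfolding nf_inv_def
  proof (rule the_equality)
    show "mul d b = u1" by (rule b(2))
    fix x assume "mul d x = u1"
    then have "mul d x = mul d b" using b(2) by simp
    then show "x = b" by (rule lcancel[OF d])
  qed
  then show ?thesis using b by simp
qed

abbreviation "e \<equiv> nf_neg add u0 u1"

lemma e_prop: "add u1 e = u0"
proof -
  obtain b where b: "add u1 b = u0" using aneg by blast
  have "\<exists>!b. add u1 b = u0"
  proof (rule ex1I[of _ b])
    show "add u1 b = u0" by (rule b)
    fix y assume "add u1 y = u0"
    then have "add u1 y = add u1 b" using b by simp
    then show "y = b" by (rule acancel)
  qed
  then show ?thesis unfolding nf_neg_def by (rule theI')
qed

lemma e_ne: "e \<noteq> u0" using e_prop one_ne_zero by auto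

lemma mul_e_r: "add a (mul a e) = u0"
proof -
  have "mul a (add u1 e) = add (mul a u1) (mul a e)" by (rule distr)
  then show ?thesis using e_prop by simp
qed

lemma ee: "mul e e = u1"
proof -
  have "add e (mul e e) = u0" by (rule mul_e_r)
  also have "\<dots> = add e u1" using e_prop acomm by simp
  finally show ?thesis by (rule acancel)
qed

lemma sq_one: "mul x x = u1 \<Longrightarrow> x = u1 \<or> x = e"
proof -
  assume h: "mul x x = u1"
  have m: "mul x (add x u1) = add x u1" using h by (simp add: distr acomm)
  show ?thesis
  proof (cases "add x u1 = u0")
    case True
    then have "add u1 x = add u1 e" using e_prop acomm by simp
    then show ?thesis using acancel by blast
  next
    case False
    then have "mul x (add x u1) = mul u1 (add x u1)" using m by simp
    then show ?thesis using rcancel False by blast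
  qed
qed

lemma e_central: "mul e a = mul a e"
proof (cases "a = u0")
  case False
  define ai where "ai = nf_inv mul u1 a"
  have ai: "mul a ai = u1" "mul ai a = u1" "ai \<noteq> u0" using ninv[OF False] ai_def by auto
  define b where "b = mul (mul ai e) a"
  have ee2: "mul e (mul e z) = z" for z by (simp add: massoc[symmetric] ee)
  have aa: "mul a (mul ai z) = z" "mul ai (mul a z) = z" for z
    using ai by (simp_all add: massoc[symmetric])
  have "mul b b = u1" unfolding b_def
    by (simp add: massoc aa ee2 ai)
  then have "b = u1 \<or> b = e" by (rule sq_one)
  then show ?thesis
  proof
    assume "b = u1"
    then have "mul a b = a" by simp
    then have "mul e a = mul u1 a" unfolding b_def by (simp add: massoc aa)
    then have "e = u1" using rcancel False by blast
    then show ?thesis by simp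
  next
    assume "b = e"
    then have "mul a b = mul a e" by simp
    then show ?thesis unfolding b_def by (simp add: massoc aa)
  qed
qed simp

lemma mul_e_l: "add a (mul e a) = u0"
  using mul_e_r e_central by simp

end

locale NFA = NF +
  fixes \<tau> :: "'a \<Rightarrow> 'a"
  assumes MA: "mult_aut mul u1 \<tau>"
begin

lemma bij: "bij \<tau>" using MA unfolding mult_aut_def by blast
lemma hom: "\<tau> (mul a b) = mul (\<tau> a) (\<tau> b)" using MA unfolding mult_aut_def by blast
lemma t1[simp]: "\<tau> u1 = u1" using MA unfolding mult_aut_def by blast
lemma tinv1[simp]: "\<tau> (inv \<tau> x) = x" using bij by (simp add: bij_is_surj surj_f_inv_f)
lemma tinv2[simp]: "inv \<tau> (\<tau> x) = x" using bij by (simp add: bij_is_inj)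
lemma tinj: "\<tau> x = \<tau> y \<Longrightarrow> x = y"
proof -
  assume "\<tau> x = \<tau> y"
  then have "inv \<tau> (\<tau> x) = inv \<tau> (\<tau> y)" by simp
  then show ?thesis by simp
qed

lemma t0[simp]: "\<tau> u0 = u0"
proof -
  have "\<tau> u0 = \<tau> (mul u0 (inv \<tau> u0))" by simp
  also have "\<dots> = mul (\<tau> u0) (\<tau> (inv \<tau> u0))" by (rule hom)
  also have "\<dots> = u0" by simp
  finally show ?thesis .
qed

lemma tnz: "x \<noteq> u0 \<Longrightarrow> \<tau> x \<noteq> u0"
  using tinj[of x u0] by auto

lemma te[simp]: "\<tau> e = e"
proof -
  have "mul (\<tau> e) (\<tau> e) = u1" using hom[of e e, symmetric] by (simp add: ee)
  then have "\<tau> e = u1 \<or> \<tau> e = e" by (rule sq_one)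
  then show ?thesis using tinj[of e u1] by auto
qed

lemma tninv: "d \<noteq> u0 \<Longrightarrow> \<tau> (nf_inv mul u1 d) = nf_inv mul u1 (\<tau> d)"
proof -
  assume d: "d \<noteq> u0"
  have "mul (\<tau> d) (\<tau> (nf_inv mul u1 d)) = u1" using ninv[OF d] hom[symmetric] by simp
  also have "\<dots> = mul (\<tau> d) (nf_inv mul u1 (\<tau> d))" using ninv[OF tnz[OF d]] by simp
  finally show ?thesis using lcancel tnz[OF d] by blast
qed

end


lemma mult_aut_comp: "mult_aut mul u1 \<sigma> \<Longrightarrow> mult_aut mul u1 \<rho> \<Longrightarrow> mult_aut mul u1 (\<sigma> \<circ> \<rho>)"
  unfolding mult_aut_def by (auto intro: bij_comp)

theorem mainTheorem5:
  fixes add mul :: "'a \<Rightarrow> 'a \<Rightarrow> 'a" and u0 u1 :: 'a and \<sigma> \<rho> :: "'a \<Rightarrow> 'a"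
  assumes "near_field add mul u0 u1"
    and "mult_aut mul u1 \<sigma>" and "mult_aut mul u1 \<rho>"
  shows "near_vector_space mul u1 u0 (nf_neg add u0 u1) (tw_add add \<sigma>) u0 (\<lambda>a b. mul (\<rho> a) b)
    \<and> quasi_kernel (tw_add add \<sigma>) (\<lambda>a b. mul (\<rho> a) b) = UNIV
    \<and> (\<forall>\<gamma>. \<gamma> \<noteq> u0 \<longrightarrow>
          qk_add (tw_add add \<sigma>) (\<lambda>a b. mul (\<rho> a) b) \<gamma> = add_dt add mul u1 (\<sigma> \<gamma>) (\<sigma> \<circ> \<rho>)
        \<and> add_dt add mul u1 (\<sigma> \<gamma>) (\<sigma> \<circ> \<rho>) = tw_add add (phi mul u1 (\<sigma> \<gamma>) \<circ> \<sigma> \<circ> \<rho>)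
        \<and> tw_add add (phi mul u1 (\<sigma> \<gamma>) \<circ> \<sigma> \<circ> \<rho>) = tw_add add (\<sigma> \<circ> phi mul u1 \<gamma> \<circ> \<rho>))
    \<and> qk_add (tw_add add \<sigma>) (\<lambda>a b. mul (\<rho> a) b) u1 = tw_add add (\<sigma> \<circ> \<rho>)"
proof -
  interpret N: NF add mul u0 u1 by (rule NF.intro) (rule assms(1))
  interpret S: NFA add mul u0 u1 \<sigma> by (rule NFA.intro[OF NF.intro[OF assms(1)] NFA_axioms.intro[OF assms(2)]])
  interpret R: NFA add mul u0 u1 \<rho> by (rule NFA.intro[OF NF.intro[OF assms(1)] NFA_axioms.intro[OF assms(3)]])
  interpret SR: NFA add mul u0 u1 "\<sigma> \<circ> \<rho>"
    by (rule NFA.intro[OF NF.intro[OF assms(1)] NFA_axioms.intro[OF mult_aut_comp[OF assms(2,3)]]])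
  have srinv[simp]: "\<sigma> (\<rho> (inv (\<sigma> \<circ> \<rho>) x)) = x" for x
    using SR.tinv1[of x] by (simp only: o_apply)
  define V where "V = tw_add add \<sigma>"
  define act where "act = (\<lambda>a b. mul (\<rho> a) b)"
  have Vd: "V a b = inv \<sigma> (add (\<sigma> a) (\<sigma> b))" for a b unfolding V_def tw_add_def by simp
  have sV: "\<sigma> (V a b) = add (\<sigma> a) (\<sigma> b)" for a b unfolding Vd by simp
  have inv0: "inv \<sigma> u0 = u0" using S.tinv2[of u0] unfolding S.t0 .
  have sg: "scalar_group mul u1 u0 N.e"
    unfolding scalar_group_def
  proof (intro conjI allI)
    show "is_monoid mul u1" using assms(1) unfolding near_field_def by blast
    show "nonzero_group mul u0 u1" using assms(1) unfolding near_field_def by blast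
    fix a
    show "mul u0 a = u0" by (rule N.mzero_l)
    show "mul a u0 = u0" by (rule N.mzero_r)
    show "N.e \<noteq> u0" by (rule N.e_ne)
    show "mul N.e N.e = u1" by (rule N.ee)
    show "mul N.e a = mul a N.e" by (rule N.e_central)
  qed
  have ag: "is_abelian_group V u0"
    unfolding is_abelian_group_def is_monoid_def
  proof (intro conjI allI)
    fix a b c show "V (V a b) c = V a (V b c)" by (simp add: Vd N.aassoc)
    show "V u0 a = a" by (simp add: Vd)
    show "V a u0 = a" by (simp add: Vd)
    show "V a b = V b a" by (simp add: Vd N.acomm)
    obtain n where "add (\<sigma> a) n = u0" using N.aneg by blast
    then have "V a (inv \<sigma> n) = u0" by (simp add: Vd inv0)
    then show "\<exists>b. V a b = u0" by blast
  qed
  have fs: "F_space mul u1 u0 N.e V u0 act"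
    unfolding F_space_def
  proof (intro conjI allI sg ag)
    fix a b v
    show "act (mul a b) v = act a (act b v)" unfolding act_def by (simp add: R.hom N.massoc)
    show "act u1 v = v" unfolding act_def by simp
    show "act u0 v = u0" unfolding act_def by simp
    have "\<sigma> (mul N.e v) = mul N.e (\<sigma> v)" by (simp add: S.hom)
    then show "V (act N.e v) v = u0" unfolding act_def
      by (simp add: Vd inv0 N.acomm N.mul_e_l)
  next
    fix a u v
    show "act a (V u v) = V (act a u) (act a v)" unfolding act_def
      by (rule S.tinj) (simp add: sV S.hom N.distr)
  qed
  have free: "\<forall>a b v. act a v = act b v \<longrightarrow> a = b \<or> v = u0"
    unfolding act_def using N.rcancel R.tinj by blast
  have qk: "quasi_kernel V act = UNIV"
  proof -
    have "u \<in> quasi_kernel V act" for u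
      unfolding quasi_kernel_def
    proof (intro CollectI allI)
      fix a b
      show "\<exists>c. V (act a u) (act b u) = act c u"
      proof (cases "u = u0")
        case True
        then show ?thesis unfolding act_def by (simp add: Vd inv0)
      next
        case False
        define X where "X = V (act a u) (act b u)"
        have "act (inv \<rho> (mul X (nf_inv mul u1 u))) u = X"
          unfolding act_def using N.ninv[OF False] by (simp add: N.massoc)
        then have "X = act (inv \<rho> (mul X (nf_inv mul u1 u))) u" by (rule sym)
        then show ?thesis unfolding X_def by (rule exI)
      qed
    qed
    then show ?thesis by blast
  qed
  have span: "add_span V u0 (quasi_kernel V act) = UNIV"
    unfolding qk by (rule sym, rule UNIV_eq_I, rule add_span.base, rule UNIV_I)
  have nvs: "near_vector_space mul u1 u0 N.e V u0 act"
    unfolding near_vector_space_def by (intro conjI fs free span)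
  have eq1: "qk_add V act \<gamma> = add_dt add mul u1 (\<sigma> \<gamma>) (\<sigma> \<circ> \<rho>)" if g: "\<gamma> \<noteq> u0" for \<gamma>
  proof (intro ext)
    fix a b
    define d where "d = \<sigma> \<gamma>"
    have d: "d \<noteq> u0" unfolding d_def using S.tnz g .
    define c0 where "c0 = add_dt add mul u1 (\<sigma> \<gamma>) (\<sigma> \<circ> \<rho>) a b"
    have c0: "(\<sigma> \<circ> \<rho>) c0 = mul (add (mul (\<sigma> (\<rho> a)) d) (mul (\<sigma> (\<rho> b)) d)) (nf_inv mul u1 d)"
      unfolding c0_def add_dt_def oplus_d_def d_def by simp
    have P: "V (act a \<gamma>) (act b \<gamma>) = act c0 \<gamma>"
    proof (rule S.tinj)
      have "\<sigma> (act c0 \<gamma>) = mul ((\<sigma> \<circ> \<rho>) c0) d" unfolding act_def d_def by (simp add: S.hom)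
      also have "\<dots> = add (mul (\<sigma> (\<rho> a)) d) (mul (\<sigma> (\<rho> b)) d)"
        unfolding c0 using N.ninv[OF d] by (simp add: N.massoc)
      finally show "\<sigma> (V (act a \<gamma>) (act b \<gamma>)) = \<sigma> (act c0 \<gamma>)"
        unfolding act_def d_def by (simp add: sV S.hom)
    qed
    show "qk_add V act \<gamma> a b = c0" unfolding qk_add_def
    proof (rule the_equality)
      show "V (act a \<gamma>) (act b \<gamma>) = act c0 \<gamma>" by (rule P)
      fix c assume "V (act a \<gamma>) (act b \<gamma>) = act c \<gamma>"
      then have "act c \<gamma> = act c0 \<gamma>" using P by simp
      then show "c = c0" using free g by blast
    qed
  qed
  have eq2: "add_dt add mul u1 (\<sigma> \<gamma>) (\<sigma> \<circ> \<rho>) = tw_add add (phi mul u1 (\<sigma> \<gamma>) \<circ> \<sigma> \<circ> \<rho>)"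
    if g: "\<gamma> \<noteq> u0" for \<gamma>
  proof (intro ext)
    fix a b
    define d where "d = \<sigma> \<gamma>"
    have d: "d \<noteq> u0" unfolding d_def using S.tnz g .
    define di where "di = nf_inv mul u1 d"
    have di: "mul d di = u1" "mul di d = u1" "di \<noteq> u0" using N.ninv[OF d] di_def by auto
    define \<tau> where "\<tau> = phi mul u1 d \<circ> \<sigma> \<circ> \<rho>"
    have injphi: "inj (phi mul u1 d)"
    proof (rule injI)
      fix x y assume "phi mul u1 d x = phi mul u1 d y"
      then have "mul (mul di x) d = mul (mul di y) d" unfolding phi_def di_def .
      then have "mul di x = mul di y" using N.rcancel d by blast
      then show "x = y" using N.lcancel di(3) by blast
    qed
    have injt: "inj \<tau>" unfolding \<tau>_def
      using injphi bij_is_inj[OF S.bij] bij_is_inj[OF R.bij] by (intro inj_compose)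
    define S where "S = add (mul (\<sigma> (\<rho> a)) d) (mul (\<sigma> (\<rho> b)) d)"
    define x where "x = inv (\<sigma> \<circ> \<rho>) (mul S di)"
    have lhs: "add_dt add mul u1 (\<sigma> \<gamma>) (\<sigma> \<circ> \<rho>) a b = x"
      unfolding add_dt_def oplus_d_def x_def S_def di_def d_def by simp
    have tx: "\<tau> x = add (\<tau> a) (\<tau> b)"
    proof -
      have "\<tau> x = phi mul u1 d (mul S di)" unfolding \<tau>_def x_def
        using SR.tinv1[of "mul S di"] by (simp del: SR.tinv1)
      also have "\<dots> = mul di S" unfolding phi_def di_def[symmetric] using di
        by (simp add: N.massoc)
      also have "\<dots> = add (\<tau> a) (\<tau> b)" unfolding \<tau>_def S_def phi_def di_def[symmetric]
        by (simp add: N.distr N.massoc)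
      finally show ?thesis .
    qed
    have "tw_add add \<tau> a b = x" unfolding tw_add_def tx[symmetric] using injt by simp
    then show "add_dt add mul u1 (\<sigma> \<gamma>) (\<sigma> \<circ> \<rho>) a b = tw_add add (phi mul u1 (\<sigma> \<gamma>) \<circ> \<sigma> \<circ> \<rho>) a b"
      using lhs unfolding \<tau>_def d_def by (simp only:)
  qed
  have eq3: "tw_add add (phi mul u1 (\<sigma> \<gamma>) \<circ> \<sigma> \<circ> \<rho>) = tw_add add (\<sigma> \<circ> phi mul u1 \<gamma> \<circ> \<rho>)"
    if g: "\<gamma> \<noteq> u0" for \<gamma>
  proof -
    have "phi mul u1 (\<sigma> \<gamma>) \<circ> \<sigma> \<circ> \<rho> = \<sigma> \<circ> phi mul u1 \<gamma> \<circ> \<rho>"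
      by (rule ext) (simp add: phi_def S.hom S.tninv[OF g])
    then show ?thesis by simp
  qed
  have eq4: "qk_add V act u1 = tw_add add (\<sigma> \<circ> \<rho>)"
  proof (intro ext)
    fix a b
    define c0 where "c0 = tw_add add (\<sigma> \<circ> \<rho>) a b"
    have P: "V (act a u1) (act b u1) = act c0 u1"
      unfolding act_def c0_def tw_add_def
      by (rule S.tinj) (simp add: sV)
    show "qk_add V act u1 a b = c0" unfolding qk_add_def
    proof (rule the_equality)
      show "V (act a u1) (act b u1) = act c0 u1" by (rule P)
      fix c assume "V (act a u1) (act b u1) = act c u1"
      then have "act c u1 = act c0 u1" using P by simp
      then show "c = c0" using free N.one_ne_zero by blast
    qed
  qed
  show ?thesis using nvs qk eq1 eq2 eq3 eq4 unfolding V_def act_def by blast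
qed

end
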